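(* For all $n\ge 1$ and $0\le k\le \lfloor n/2\rfloor$, $$W(n+1,k)=2^{n-k}S(n,k).$$ Moreover, for $n\ge 1$, $$S_n(x)=\frac{1}{2^{n+1}x}\sum_{k=0}^{\lfloor n/2\rfloor+1}p(n+1,n-2k+2)\,(2x-1)^k,$$ where for positive integers $m$ and integers $k$ we set $$p(m,m-2k+1)=(-1)^{k}\sum_{i\ge 1} i!\,{m\brace i}\,(-2)^{m-i}\left[\binom{i}{m-2k}-\binom{i}{m-2k+1}\right],$$ with ${m\brace i}$ the Stirling numbers of the second kind.
   Context: For a permutation $\pi=\pi(1)\cdots\pi(n)$ of $[n]=\{1,\dots,n\}$, a descent is an index $i\in[n-1]$ with $\pi(i)>\pi(i+1)$, and ${\rm des}(\pi)$ is the number of descents. A double descent is an index $i\in[n-2]$ with $\pi(i)>\pi(i+1)>\pi(i+2)$. The permutation $\pi$ is simsun if for every $k\in[n]$, the subword of $\pi$ consisting of the letters in $[k]$ (in the order they appear in $\pi$) has no double descents. Let $\mathcal{RS}_n$ be the set of simsun permutations of $[n]$, $S(n,k)=\#\{\pi\in\mathcal{RS}_n:{\rm des}(\pi)=k\}$ and $S_n(x)=\sum_k S(n,k)x^k$. An interior peak of $\pi\in\mathfrak S_n$ is an index $i\in\{2,\dots,n-1\}$ with $\pi(i-1)<\pi(i)>\pi(i+1)$; $W(n,k)$ denotes the number of permutations in $\mathfrak S_n$ with exactly $k$ interior peaks. *)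

theory Defs
  imports Complex_Main "HOL-Combinatorics.Stirling"
begin

text \<open>Permutations of [n] in one-line notation, as lists (0-based positions).\<close>
definition perms :: "nat \<Rightarrow> nat list set" where
  "perms n = {xs. distinct xs \<and> set xs = {1..n}}"

definition des :: "nat list \<Rightarrow> nat" where
  "des xs = card {i. Suc i < length xs \<and> xs ! i > xs ! Suc i}"

definition has_double_descent :: "nat list \<Rightarrow> bool" where
  "has_double_descent xs \<longleftrightarrow>
     (\<exists>i. i + 2 < length xs \<and> xs ! i > xs ! (i+1) \<and> xs ! (i+1) > xs ! (i+2))"

definition simsun :: "nat list \<Rightarrow> bool" where
  "simsun xs \<longleftrightarrow>
     (\<forall>k \<in> {1..length xs}. \<not> has_double_descent (filter (\<lambda>x. x \<le> k) xs))"

definition RS :: "nat \<Rightarrow> nat list set" where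
  "RS n = {xs \<in> perms n. simsun xs}"

definition S :: "nat \<Rightarrow> nat \<Rightarrow> nat" where
  "S n k = card {xs \<in> RS n. des xs = k}"

definition S_poly :: "nat \<Rightarrow> real \<Rightarrow> real" where
  "S_poly n x = (\<Sum>k\<le>n. real (S n k) * x ^ k)"

text \<open>Interior peaks: 1-based index i in {2..n-1} is 0-based index j in {1..n-2}.\<close>
definition ipk :: "nat list \<Rightarrow> nat" where
  "ipk xs = card {j. 0 < j \<and> Suc j < length xs \<and> xs ! (j-1) < xs ! j \<and> xs ! j > xs ! Suc j}"

definition W :: "nat \<Rightarrow> nat \<Rightarrow> nat" where
  "W n k = card {xs \<in> perms n. ipk xs = k}"

definition ibinom :: "nat \<Rightarrow> int \<Rightarrow> int" where
  "ibinom i j = (if j < 0 then 0 else int (i choose nat j))"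

text \<open>p_coef m k = p(m, m-2k+1).  The sum over i \<ge> 1 is finite: Stirling m i = 0 for i > m.\<close>
definition p_coef :: "nat \<Rightarrow> int \<Rightarrow> int" where
  "p_coef m k = (-1) ^ nat \<bar>k\<bar> * (\<Sum>i=1..m. int (fact i) * int (Stirling m i) * (-2) ^ (m - i)
        * (ibinom i (int m - 2*k) - ibinom i (int m - 2*k + 1)))"

end

theory Submission
  imports Defs "HOL-Computational_Algebra.Polynomial"
begin


lemma des_Nil[simp]: "des [] = 0" by (simp add: des_def)
lemma des_single[simp]: "des [a] = 0" by (simp add: des_def)

lemma des_Cons2: "des (a#b#xs) = (if b < a then 1 else 0) + des (b#xs)"
proof -
  let ?D = "\<lambda>ys. {i. Suc i < length ys \<and> ys ! i > ys ! Suc i}"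
  have eq: "?D (a#b#xs) = {i. i = 0 \<and> b < a} \<union> Suc ` ?D (b#xs)"
  proof (intro set_eqI iffI)
    fix x assume "x \<in> ?D (a#b#xs)" then show "x \<in> {i. i = 0 \<and> b < a} \<union> Suc ` ?D (b#xs)"
      by (cases x) auto
  next
    fix x assume "x \<in> {i. i = 0 \<and> b < a} \<union> Suc ` ?D (b#xs)" then show "x \<in> ?D (a#b#xs)"
      by auto
  qed
  have fin: "finite (?D (b#xs))" by (rule finite_subset[of _ "{..<length (b#xs)}"]) auto
  have "card (?D (a#b#xs)) = card {i::nat. i = 0 \<and> b < a} + card (Suc ` ?D (b#xs))"
    unfolding eq by (rule card_Un_disjoint) (use fin in auto)
  also have "card (Suc ` ?D (b#xs)) = card (?D (b#xs))" by (rule card_image) auto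
  also have "card {i::nat. i = 0 \<and> b < a} = (if b < a then 1 else 0)" by auto
  finally show ?thesis by (simp add: des_def)
qed


abbreviation "hdd \<equiv> has_double_descent"

lemma hdd_short: "length xs < 3 \<Longrightarrow> \<not> hdd xs"
  by (auto simp: has_double_descent_def)

lemma hdd_Cons3: "hdd (a#b#c#xs) \<longleftrightarrow> (a > b \<and> b > c) \<or> hdd (b#c#xs)"
proof
  assume "hdd (a#b#c#xs)"
  then obtain i where i: "i + 2 < length (a#b#c#xs)" "(a#b#c#xs) ! i > (a#b#c#xs) ! (i+1)"
    "(a#b#c#xs) ! (i+1) > (a#b#c#xs) ! (i+2)" by (auto simp: has_double_descent_def)
  show "(a > b \<and> b > c) \<or> hdd (b#c#xs)"
  proof (cases i)
    case 0 then show ?thesis using i by auto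
  next
    case (Suc j) then show ?thesis using i unfolding has_double_descent_def
      by (intro disjI2 exI[of _ j]) auto
  qed
next
  assume "(a > b \<and> b > c) \<or> hdd (b#c#xs)"
  then show "hdd (a#b#c#xs)"
  proof
    assume "a > b \<and> b > c" then show ?thesis unfolding has_double_descent_def
      by (intro exI[of _ 0]) auto
  next
    assume "hdd (b#c#xs)"
    then obtain i where i: "i + 2 < length (b#c#xs)" "(b#c#xs) ! i > (b#c#xs) ! (i+1)"
      "(b#c#xs) ! (i+1) > (b#c#xs) ! (i+2)" by (auto simp: has_double_descent_def)
    then show ?thesis unfolding has_double_descent_def
      by (intro exI[of _ "Suc i"]) auto
  qed
qed

lemma hdd_Cons: "hdd xs \<Longrightarrow> hdd (a#xs)"
  unfolding has_double_descent_def
  by (erule exE, rule_tac x="Suc i" in exI) auto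

lemma hdd_append1: "hdd xs \<Longrightarrow> hdd (xs @ ys)"
  unfolding has_double_descent_def
  by (erule exE, rule_tac x="i" in exI) (auto simp: nth_append)

lemma hdd_append2: "hdd ys \<Longrightarrow> hdd (xs @ ys)"
  by (induction xs) (auto intro: hdd_Cons)

lemma hdd_M: assumes "\<forall>y\<in>set ys. y < M" shows "
   hdd (M # ys) \<longleftrightarrow> (\<exists>b1 b2 r. ys = b1#b2#r \<and> b1 > b2) \<or> hdd ys"
proof (cases ys)
  case Nil then show ?thesis by (simp add: hdd_short)
next
  case (Cons b1 r) note c1 = this
  show ?thesis
  proof (cases r)
    case Nil then show ?thesis using c1 by (simp add: hdd_short)
  next
    case (Cons b2 r') then show ?thesis using c1 assms by (simp add: hdd_Cons3)
  qed
qed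

lemma hdd_ins: "\<forall>x\<in>set xs. x < M \<Longrightarrow> hdd (xs @ M # ys) \<longleftrightarrow> hdd xs \<or> hdd (M # ys)"
proof (induction xs rule: induct_list012)
  case 1 then show ?case by (simp add: hdd_short)
next
  case (2 a) then show ?case
    by (cases ys) (auto simp: hdd_short hdd_Cons3)
next
  case (3 x y zs)
  show ?case
  proof (cases zs)
    case Nil then show ?thesis using 3 by (auto simp: hdd_short hdd_Cons3)
  next
    case (Cons z zs') then show ?thesis using 3 by (auto simp: hdd_Cons3)
  qed
qed

lemma des_append: "des (xs @ ys) = des xs + des ys + (if xs \<noteq> [] \<and> ys \<noteq> [] \<and> hd ys < last xs then 1 else 0)"
proof (induction xs rule: induct_list012)
  case 1 then show ?case by simp
next
  case (2 a) then show ?case by (cases ys) (auto simp: des_Cons2)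
next
  case (3 x y zs) then show ?case by (auto simp: des_Cons2)
qed

lemma ipk_short: "length xs < 3 \<Longrightarrow> ipk xs = 0"
proof -
  assume "length xs < 3"
  then have e: "{j. 0 < j \<and> Suc j < length xs \<and> xs ! (j-1) < xs ! j \<and> xs ! j > xs ! Suc j} = {}" by auto
  show ?thesis unfolding ipk_def e by simp
qed

lemma ipk_Nil[simp]: "ipk [] = 0" by (simp add: ipk_short)
lemma ipk_single[simp]: "ipk [a] = 0" by (simp add: ipk_short)
lemma ipk_two[simp]: "ipk [a,b] = 0" by (simp add: ipk_short)

lemma ipk_Cons3: "ipk (a#b#c#xs) = (if a < b \<and> b > c then 1 else 0) + ipk (b#c#xs)"
proof -
  let ?P = "\<lambda>ys. {j. 0 < j \<and> Suc j < length ys \<and> ys ! (j-1) < ys ! j \<and> ys ! j > ys ! Suc j}"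
  have eq: "?P (a#b#c#xs) = {j. j = 1 \<and> a < b \<and> b > c} \<union> Suc ` ?P (b#c#xs)"
  proof (intro set_eqI iffI)
    fix x assume "x \<in> ?P (a#b#c#xs)" then show "x \<in> {j. j = 1 \<and> a < b \<and> b > c} \<union> Suc ` ?P (b#c#xs)"
    proof (cases x)
      case 0 then show ?thesis using \<open>x \<in> _\<close> by auto
    next
      case (Suc j) note s = this
      show ?thesis
      proof (cases j)
        case 0 then show ?thesis using s \<open>x \<in> _\<close> by auto
      next
        case (Suc j') then show ?thesis using s \<open>x \<in> _\<close> by (auto simp: image_iff)
      qed
    qed
  next
    fix x assume "x \<in> {j. j = 1 \<and> a < b \<and> b > c} \<union> Suc ` ?P (b#c#xs)" then show "x \<in> ?P (a#b#c#xs)"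
      by (auto simp: nth_Cons split: nat.splits)
  qed
  have fin: "finite (?P (b#c#xs))" by (rule finite_subset[of _ "{..<length (b#c#xs)}"]) auto
  have "card (?P (a#b#c#xs)) = card {j::nat. j = 1 \<and> a < b \<and> b > c} + card (Suc ` ?P (b#c#xs))"
    unfolding eq by (rule card_Un_disjoint) (use fin in auto)
  also have "card (Suc ` ?P (b#c#xs)) = card (?P (b#c#xs))" by (rule card_image) auto
  also have "card {j::nat. j = 1 \<and> a < b \<and> b > c} = (if a < b \<and> b > c then 1 else 0)" by auto
  finally show ?thesis by (simp add: ipk_def)
qed

lemma ipk_M: "ipk (M # ys) = ipk ys" if "\<forall>y\<in>set ys. y < M"
proof (cases ys rule: remdups_adj.cases)
  case 1 then show ?thesis by (simp add: ipk_short)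
next
  case (2 x) then show ?thesis by (simp add: ipk_short)
next
  case (3 x y xs) then show ?thesis using that by (simp add: ipk_Cons3)
qed

lemma ipk_ins: "\<forall>x\<in>set xs. x < M \<Longrightarrow> \<forall>y\<in>set ys. y < M \<Longrightarrow>
   ipk (xs @ M # ys) = ipk xs + ipk ys + (if xs \<noteq> [] \<and> ys \<noteq> [] then 1 else 0)"
proof (induction xs rule: induct_list012)
  case 1 then show ?case by (simp add: ipk_M ipk_short)
next
  case (2 a) then show ?case
    by (cases ys) (auto simp: ipk_short ipk_Cons3 ipk_M)
next
  case (3 x y zs)
  show ?case
  proof (cases zs)
    case Nil then show ?thesis using 3 by (auto simp: ipk_short ipk_Cons3)
  next
    case (Cons z zs') then show ?thesis using 3 by (auto simp: ipk_Cons3)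
  qed
qed

lemma ipk_append: "ipk (xs @ ys) = ipk xs + ipk ys
   + (if length xs \<ge> 2 \<and> ys \<noteq> [] \<and> xs ! (length xs - 2) < last xs \<and> last xs > hd ys then 1 else 0)
   + (if xs \<noteq> [] \<and> length ys \<ge> 2 \<and> last xs < hd ys \<and> hd ys > ys ! 1 then 1 else 0)"
proof (induction xs rule: induct_list012)
  case 1 then show ?case by simp
next
  case (2 a) then show ?case
    by (cases ys rule: remdups_adj.cases) (auto simp: ipk_short ipk_Cons3)
next
  case (3 x y zs)
  show ?case
  proof (cases zs)
    case Nil then show ?thesis using 3
      by (cases ys) (auto simp: ipk_short ipk_Cons3)
  next
    case (Cons z zs')
    have "(x#y#zs) ! (length (x#y#zs) - 2) = (y#zs) ! (length (y#zs) - 2)" using Cons by simp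
    then show ?thesis using 3 Cons by (auto simp: ipk_Cons3)
  qed
qed


lemma perms_length: "\<sigma> \<in> perms n \<Longrightarrow> length \<sigma> = n"
proof -
  assume "\<sigma> \<in> perms n"
  then have "distinct \<sigma>" "set \<sigma> = {1..n}" by (simp_all add: perms_def)
  then have "length \<sigma> = card {1..n}" by (metis distinct_card)
  then show ?thesis by simp
qed

lemma finite_perms: "finite (perms n)"
proof (rule finite_subset)
  show "perms n \<subseteq> {xs. set xs \<subseteq> {1..n} \<and> length xs = n}"
  proof
    fix xs assume "xs \<in> perms n"
    then show "xs \<in> {xs. set xs \<subseteq> {1..n} \<and> length xs = n}"
      using perms_length[of xs n] by (simp add: perms_def)
  qed
  show "finite {xs. set xs \<subseteq> {1..n} \<and> length xs = n}" by (rule finite_lists_length_eq) simp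
qed

lemma set_ins: "set (take g \<sigma> @ x # drop g \<sigma>) = insert x (set \<sigma>)"
proof -
  have "set \<sigma> = set (take g \<sigma>) \<union> set (drop g \<sigma>)" by (metis append_take_drop_id set_append)
  then show ?thesis by (simp only: set_append list.set(2) Un_insert_right)
qed

lemma distinct_ins: "distinct \<sigma> \<Longrightarrow> x \<notin> set \<sigma> \<Longrightarrow> distinct (take g \<sigma> @ x # drop g \<sigma>)"
proof -
  assume d: "distinct \<sigma>" and x: "x \<notin> set \<sigma>"
  have 1: "distinct (take g \<sigma> @ drop g \<sigma>)" using d by simp
  have 2: "x \<notin> set (take g \<sigma>)" "x \<notin> set (drop g \<sigma>)" using x by (meson in_set_takeD in_set_dropD)+
  show ?thesis using 1 2 by (simp del: append_take_drop_id)
qed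

lemma interval_Suc: "insert (Suc n) {1..n} = {1..Suc n}" by auto

lemma card_perms_Suc:
  "card {\<pi> \<in> perms (Suc n). P \<pi>} = (\<Sum>\<sigma>\<in>perms n. card {g. g \<le> n \<and> P (take g \<sigma> @ Suc n # drop g \<sigma>)})"
proof -
  let ?f = "\<lambda>(\<sigma>,g). take g \<sigma> @ Suc n # drop g \<sigma>"
  let ?A = "SIGMA \<sigma>:perms n. {g. g \<le> n \<and> P (take g \<sigma> @ Suc n # drop g \<sigma>)}"
  have inj: "inj_on ?f ?A"
  proof (rule inj_onI, clarify)
    fix \<sigma> g \<sigma>' g'
    assume s: "\<sigma> \<in> perms n" "g \<le> n" and s': "\<sigma>' \<in> perms n" "g' \<le> n"
      and eq: "take g \<sigma> @ Suc n # drop g \<sigma> = take g' \<sigma>' @ Suc n # drop g' \<sigma>'"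
    have "Suc n \<notin> set \<sigma>" using s by (simp add: perms_def)
    then have n1: "Suc n \<notin> set (take g \<sigma>)" "Suc n \<notin> set (drop g \<sigma>)"
      by (meson in_set_takeD in_set_dropD)+
    have "take g \<sigma> = take g' \<sigma>' \<and> drop g \<sigma> = drop g' \<sigma>'"
      using eq append_Cons_eq_iff[OF n1] by blast
    then have e: "take g \<sigma> = take g' \<sigma>'" "drop g \<sigma> = drop g' \<sigma>'" by simp_all
    have l: "length \<sigma> = n" "length \<sigma>' = n" using s s' perms_length by blast+
    have "\<sigma> = take g \<sigma> @ drop g \<sigma>" by simp
    also have "\<dots> = take g' \<sigma>' @ drop g' \<sigma>'" using e by simp
    also have "\<dots> = \<sigma>'" by simp
    finally have "\<sigma> = \<sigma>'" .
    moreover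
    have g1: "g = length (take g \<sigma>)" using l(1) s(2) by simp
    have g2: "g' = length (take g' \<sigma>')" using l(2) s'(2) by simp
    have g3: "length (take g \<sigma>) = length (take g' \<sigma>')" by (simp only: e(1))
    have "g = g'" using g1 g2 g3 by linarith
    ultimately show "\<sigma> = \<sigma>' \<and> g = g'" by blast
  qed
  have img: "?f ` ?A = {\<pi> \<in> perms (Suc n). P \<pi>}"
  proof (intro set_eqI iffI)
    fix \<pi> assume "\<pi> \<in> ?f ` ?A"
    then obtain q where q: "q \<in> ?A" "\<pi> = ?f q" by (rule imageE)
    obtain \<sigma> g where qq: "q = (\<sigma>, g)" by (cases q)
    have s: "\<sigma> \<in> perms n" "g \<le> n" "P (take g \<sigma> @ Suc n # drop g \<sigma>)"
      using q(1) unfolding qq by simp_all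
    have pi: "\<pi> = take g \<sigma> @ Suc n # drop g \<sigma>" using q(2) unfolding qq by simp
    have d: "distinct \<sigma>" and st: "set \<sigma> = {1..n}" using s by (simp_all add: perms_def)
    have "Suc n \<notin> set \<sigma>" using st by simp
    then have "distinct \<pi>" unfolding pi using d by (intro distinct_ins)
    moreover have "set \<pi> = {1..Suc n}" unfolding pi set_ins st interval_Suc ..
    ultimately show "\<pi> \<in> {\<pi> \<in> perms (Suc n). P \<pi>}" using s(3) unfolding pi perms_def by simp
  next
    fix \<pi> assume "\<pi> \<in> {\<pi> \<in> perms (Suc n). P \<pi>}"
    then have p: "distinct \<pi>" "set \<pi> = {1..Suc n}" "P \<pi>" by (simp_all add: perms_def)
    then have "Suc n \<in> set \<pi>" by simp
    then obtain A B where AB: "\<pi> = A @ Suc n # B" by (meson split_list)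
    let ?\<sigma> = "A @ B"
    have dA: "distinct (A @ Suc n # B)" using p(1) AB by simp
    then have "distinct ?\<sigma>" by simp
    moreover have "set ?\<sigma> = {1..n}"
    proof -
      have "set ?\<sigma> = set (A @ Suc n # B) - {Suc n}" using dA by auto
      also have "\<dots> = {1..Suc n} - {Suc n}" using p(2) AB by simp
      also have "\<dots> = {1..n}" by auto
      finally show ?thesis .
    qed
    ultimately have sp: "?\<sigma> \<in> perms n" by (simp add: perms_def)
    have "length A \<le> n" using perms_length[OF sp] by simp
    then have "(?\<sigma>, length A) \<in> ?A" using sp p(3) AB by simp
    moreover have "\<pi> = ?f (?\<sigma>, length A)" using AB by simp
    ultimately show "\<pi> \<in> ?f ` ?A" by (rule rev_image_eqI)
  qed
  have "card {\<pi> \<in> perms (Suc n). P \<pi>} = card ?A" using card_image[OF inj] unfolding img .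
  also have "\<dots> = (\<Sum>\<sigma>\<in>perms n. card {g. g \<le> n \<and> P (take g \<sigma> @ Suc n # drop g \<sigma>)})"
    by (rule card_SigmaI) (simp_all add: finite_perms)
  finally show ?thesis .
qed


lemma drop_two: "Suc g < length xs \<Longrightarrow> drop g xs = xs ! g # xs ! Suc g # drop (Suc (Suc g)) xs"
  by (metis Cons_nth_drop_Suc Suc_lessD)

lemma last_take: "0 < g \<Longrightarrow> g \<le> length xs \<Longrightarrow> last (take g xs) = xs ! (g - 1)"
proof -
  assume a: "0 < g" "g \<le> length xs"
  then have ne: "take g xs \<noteq> []" by (cases xs) auto
  have "last (take g xs) = take g xs ! (length (take g xs) - 1)" by (rule last_conv_nth[OF ne])
  also have "\<dots> = take g xs ! (g - 1)" using a by simp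
  also have "\<dots> = xs ! (g - 1)" using a by simp
  finally show ?thesis .
qed

lemma Ball_insert: "(\<forall>x\<in>insert a B. P x) \<longleftrightarrow> P a \<and> (\<forall>x\<in>B. P x)" by simp

lemma simsun_ins:
  assumes s: "\<sigma> \<in> perms n" and g: "g \<le> n"
  shows "simsun (take g \<sigma> @ Suc n # drop g \<sigma>) \<longleftrightarrow> simsun \<sigma> \<and> \<not> hdd (take g \<sigma> @ Suc n # drop g \<sigma>)"
proof -
  let ?v = "take g \<sigma> @ Suc n # drop g \<sigma>"
  have l: "length \<sigma> = n" using s perms_length by blast
  have lv: "length ?v = Suc n" using l g by simp
  have st: "set \<sigma> = {1..n}" using s by (simp add: perms_def)
  have f1: "filter (\<lambda>x. x \<le> k) ?v = filter (\<lambda>x. x \<le> k) \<sigma>" if "k \<le> n" for k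
  proof -
    have "filter (\<lambda>x. x \<le> k) ?v = filter (\<lambda>x. x \<le> k) (take g \<sigma>) @ filter (\<lambda>x. x \<le> k) (drop g \<sigma>)"
      using that by simp
    also have "\<dots> = filter (\<lambda>x. x \<le> k) (take g \<sigma> @ drop g \<sigma>)" by (simp only: filter_append)
    finally show ?thesis by simp
  qed
  have f2: "filter (\<lambda>x. x \<le> Suc n) ?v = ?v"
  proof (rule filter_True)
    show "\<forall>x\<in>set ?v. x \<le> Suc n" unfolding set_ins st by auto
  qed
  have A: "simsun ?v \<longleftrightarrow> (\<forall>k\<in>{1..n}. \<not> hdd (filter (\<lambda>x. x \<le> k) ?v)) \<and> \<not> hdd ?v"
    unfolding simsun_def[of ?v] lv interval_Suc[symmetric] Ball_insert f2 by (rule conj_commute)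
  have B: "(\<forall>k\<in>{1..n}. \<not> hdd (filter (\<lambda>x. x \<le> k) ?v)) \<longleftrightarrow> (\<forall>k\<in>{1..n}. \<not> hdd (filter (\<lambda>x. x \<le> k) \<sigma>))"
  proof (rule ball_cong[OF refl])
    fix k assume "k \<in> {1..n}"
    then have "k \<le> n" by simp
    show "\<not> hdd (filter (\<lambda>x. x \<le> k) ?v) \<longleftrightarrow> \<not> hdd (filter (\<lambda>x. x \<le> k) \<sigma>)" by (simp only: f1[OF \<open>k \<le> n\<close>])
  qed
  have C: "(\<forall>k\<in>{1..n}. \<not> hdd (filter (\<lambda>x. x \<le> k) \<sigma>)) \<longleftrightarrow> simsun \<sigma>"
    unfolding simsun_def[of \<sigma>] l ..
  show ?thesis using A B C by blast
qed

lemma local_S: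
  assumes d: "distinct \<sigma>" and lt: "\<forall>x\<in>set \<sigma>. x < M" and nd: "\<not> hdd \<sigma>" and l: "length \<sigma> = n"
  shows "card {g. g \<le> n \<and> \<not> hdd (take g \<sigma> @ M # drop g \<sigma>) \<and> des (take g \<sigma> @ M # drop g \<sigma>) = k}
     = (if k = des \<sigma> then des \<sigma> + 1 else if k = des \<sigma> + 1 then n - 2 * des \<sigma> else 0)"
proof -
  define v where "v g = take g \<sigma> @ M # drop g \<sigma>" for g
  define D where "D = {i. Suc i < n \<and> \<sigma> ! i > \<sigma> ! Suc i}"
  define Gd where "Gd = Suc ` D"
  have cD: "card D = des \<sigma>" unfolding D_def des_def l ..
  have finD: "finite D" unfolding D_def by (rule finite_subset[of _ "{..<n}"]) auto
  have cGd: "card Gd = des \<sigma>" unfolding Gd_def using cD by (simp add: card_image)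
  have Gd_iff: "g \<in> Gd \<longleftrightarrow> 0 < g \<and> g < n \<and> \<sigma> ! (g-1) > \<sigma> ! g" for g
    unfolding Gd_def D_def by (cases g) auto
  have ltt: "\<forall>x\<in>set (take g \<sigma>). x < M" "\<forall>x\<in>set (drop g \<sigma>). x < M" for g
    using lt by (meson in_set_takeD in_set_dropD)+
  have hdd_v: "hdd (v g) \<longleftrightarrow> g \<in> D" if "g \<le> n" for g
  proof -
    have nt: "\<not> hdd (take g \<sigma>)" "\<not> hdd (drop g \<sigma>)"
      using nd hdd_append1[of "take g \<sigma>" "drop g \<sigma>"] hdd_append2[of "drop g \<sigma>" "take g \<sigma>"] by auto
    have "hdd (v g) \<longleftrightarrow> (\<exists>b1 b2 r. drop g \<sigma> = b1#b2#r \<and> b1 > b2)"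
      unfolding v_def hdd_ins[OF ltt(1)] hdd_M[OF ltt(2)] using nt by simp
    also have "\<dots> \<longleftrightarrow> g \<in> D"
    proof
      assume "\<exists>b1 b2 r. drop g \<sigma> = b1#b2#r \<and> b1 > b2"
      then obtain b1 b2 r where e: "drop g \<sigma> = b1#b2#r" "b1 > b2" by blast
      have "length (drop g \<sigma>) = Suc (Suc (length r))" using e(1) by simp
      then have "Suc g < n" using l by simp
      then show "g \<in> D" using e drop_two[of g \<sigma>] l unfolding D_def by simp
    next
      assume "g \<in> D"
      then show "\<exists>b1 b2 r. drop g \<sigma> = b1#b2#r \<and> b1 > b2" using drop_two[of g \<sigma>] l unfolding D_def by auto
    qed
    finally show ?thesis .
  qed
  have des_v: "des (v g) + (if g \<in> Gd then 1 else 0) = des \<sigma> + (if g < n then 1 else 0)" if "g \<le> n" for g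
  proof -
    have e1: "des (v g) = des (take g \<sigma>) + des (M # drop g \<sigma>)"
    proof (cases "take g \<sigma> = []")
      case True then show ?thesis unfolding v_def by (simp only: True append_Nil des_Nil add_0)
    next
      case False
      then have "last (take g \<sigma>) < M" using ltt(1)[of g] last_in_set by blast
      then show ?thesis using False unfolding v_def des_append by simp
    qed
    have e2: "des (M # drop g \<sigma>) = des (drop g \<sigma>) + (if g < n then 1 else 0)"
    proof (cases "drop g \<sigma>")
      case Nil then show ?thesis using l by simp
    next
      case (Cons b r) then have "b < M" using ltt(2)[of g] by simp
      then show ?thesis using Cons l by (simp add: des_Cons2) (metis Cons drop_eq_Nil2 list.distinct(1) not_le)
    qed
    have e3: "des \<sigma> = des (take g \<sigma>) + des (drop g \<sigma>) + (if g \<in> Gd then 1 else 0)"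
    proof -
      have "des \<sigma> = des (take g \<sigma> @ drop g \<sigma>)" by simp
      also have "\<dots> = des (take g \<sigma>) + des (drop g \<sigma>) + (if take g \<sigma> \<noteq> [] \<and> drop g \<sigma> \<noteq> [] \<and> hd (drop g \<sigma>) < last (take g \<sigma>) then 1 else 0)"
        by (rule des_append)
      also have "(take g \<sigma> \<noteq> [] \<and> drop g \<sigma> \<noteq> [] \<and> hd (drop g \<sigma>) < last (take g \<sigma>)) \<longleftrightarrow> g \<in> Gd"
      proof (cases "0 < g \<and> g < n")
        case True
        then have "hd (drop g \<sigma>) = \<sigma> ! g" "last (take g \<sigma>) = \<sigma> ! (g - 1)"
          using l True by (simp_all add: hd_drop_conv_nth last_take)
        then show ?thesis using True l Gd_iff[of g] by (cases \<sigma>) simp_all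
      next
        case False
        have "g \<notin> Gd" using Gd_iff[of g] False by blast
        moreover have "take g \<sigma> = [] \<or> drop g \<sigma> = []" using False that l by (cases "g = 0") simp_all
        ultimately show ?thesis by blast
      qed
      finally show ?thesis .
    qed
    show ?thesis using e1 e2 e3 by linarith
  qed
  have disj: "Gd \<inter> D = {}"
  proof (rule ccontr)
    assume "Gd \<inter> D \<noteq> {}"
    then obtain g where "g \<in> Gd" "g \<in> D" by blast
    then have "0 < g" "Suc g < n" "\<sigma> ! (g-1) > \<sigma> ! g" "\<sigma> ! g > \<sigma> ! Suc g"
      using Gd_iff[of g] unfolding D_def by auto
    then have "hdd \<sigma>" unfolding has_double_descent_def l
      by (intro exI[of _ "g - 1"]) simp
    then show False using nd by simp
  qed
  have Dsub: "D \<subseteq> {..<n}" "Gd \<subseteq> {..<n}"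
  proof -
    show "D \<subseteq> {..<n}" unfolding D_def by auto
    show "Gd \<subseteq> {..<n}" using Gd_iff by blast
  qed
  show ?thesis
  proof -
    let ?X = "{g. g \<le> n \<and> \<not> hdd (v g) \<and> des (v g) = k}"
    consider (a) "k = des \<sigma>" | (b) "k = des \<sigma> + 1" | (c) "k \<noteq> des \<sigma>" "k \<noteq> des \<sigma> + 1" by blast
    then show ?thesis
    proof cases
      case a
      have "?X = insert n Gd"
      proof (intro set_eqI iffI)
        fix g assume "g \<in> ?X"
        then have "g \<le> n" "des (v g) = des \<sigma>" using a by auto
        then show "g \<in> insert n Gd" using des_v[of g] by (cases "g \<in> Gd"; cases "g < n") auto
      next
        fix g assume gi: "g \<in> insert n Gd"
        have gn: "g \<le> n" using gi Dsub by auto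
        have nD: "g \<notin> D" using gi disj Dsub(1) by auto
        have "des (v g) = des \<sigma>" using gi des_v[OF gn] Gd_iff[of g] by (cases "g = n") auto
        then show "g \<in> ?X" using hdd_v[OF gn] nD gn a by simp
      qed
      moreover have "n \<notin> Gd" using Dsub by auto
      moreover have "finite Gd" unfolding Gd_def using finD by simp
      ultimately show ?thesis unfolding v_def using a cGd by simp
    next
      case b
      have "?X = {..<n} - D - Gd"
      proof (intro set_eqI iffI)
        fix g assume "g \<in> ?X"
        then have "g \<le> n" "\<not> hdd (v g)" "des (v g) = des \<sigma> + 1" using b by auto
        then show "g \<in> {..<n} - D - Gd" using des_v[of g] hdd_v[of g] by (cases "g \<in> Gd"; cases "g < n") auto
      next
        fix g assume "g \<in> {..<n} - D - Gd"
        then show "g \<in> ?X" using des_v[of g] hdd_v[of g] b by auto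
      qed
      moreover have "card ({..<n} - D - Gd) = n - des \<sigma> - des \<sigma>"
      proof -
        have "card ({..<n} - D - Gd) = card ({..<n} - D) - card Gd"
          using Dsub disj by (subst card_Diff_subset) (auto simp: Gd_def finD)
        also have "card ({..<n} - D) = n - des \<sigma>" using Dsub cD by (subst card_Diff_subset) (auto simp: finD)
        finally show ?thesis using cGd by simp
      qed
      ultimately show ?thesis unfolding v_def using b by simp
    next
      case c
      have "?X = {}"
      proof (intro set_eqI iffI)
        fix g assume "g \<in> ?X"
        then have "g \<le> n" "des (v g) = k" by auto
        then show "g \<in> {}" using des_v[of g] c Gd_iff[of g] by (cases "g \<in> Gd"; cases "g < n") auto
      qed simp
      then show ?thesis unfolding v_def using c by simp
    qed
  qed
qed


lemma simsun_nodd: assumes "\<sigma> \<in> perms n" "simsun \<sigma>" shows "\<not> hdd \<sigma>"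
proof (cases "n = 0")
  case True then have "\<sigma> = []" using assms(1) perms_length by blast
  then show ?thesis by (simp add: hdd_short)
next
  case False
  have l: "length \<sigma> = n" using assms(1) perms_length by blast
  have "\<forall>x\<in>set \<sigma>. x \<le> n" using assms(1) by (simp add: perms_def)
  then have "filter (\<lambda>x. x \<le> n) \<sigma> = \<sigma>" by (rule filter_True)
  moreover have "n \<in> {1..length \<sigma>}" using False l by simp
  ultimately show ?thesis using assms(2) unfolding simsun_def by metis
qed

lemma sum_if_const: "finite A \<Longrightarrow> (\<Sum>x\<in>A. if P x then (c::nat) else 0) = c * card {x\<in>A. P x}"
proof -
  assume f: "finite A"
  have "(\<Sum>x\<in>A. if P x then c else 0) = (\<Sum>x\<in>{x\<in>A. P x}. c)" using sum.inter_filter[OF f, of "\<lambda>x. c" P] by simp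
  also have "\<dots> = c * card {x\<in>A. P x}" by (simp add: mult.commute)
  finally show ?thesis .
qed

lemma finite_RS: "finite (RS n)" unfolding RS_def using finite_perms by simp

lemma S_rec: "S (Suc n) k = (k+1) * S n k + (if k = 0 then 0 else (n - 2*(k-1)) * S n (k-1))"
proof -
  define F where "F d = (if k = d then d+1 else if k = d+1 then n - 2*d else 0)" for d
  have "S (Suc n) k = card {\<pi> \<in> perms (Suc n). simsun \<pi> \<and> des \<pi> = k}"
    unfolding S_def RS_def by (simp add: conj_assoc)
  also have "\<dots> = (\<Sum>\<sigma>\<in>perms n. card {g. g \<le> n \<and> (simsun (take g \<sigma> @ Suc n # drop g \<sigma>) \<and> des (take g \<sigma> @ Suc n # drop g \<sigma>) = k)})"
    by (rule card_perms_Suc)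
  also have "\<dots> = (\<Sum>\<sigma>\<in>perms n. if simsun \<sigma> then F (des \<sigma>) else 0)"
  proof (rule sum.cong[OF refl])
    fix \<sigma> assume s: "\<sigma> \<in> perms n"
    have sv: "simsun (take g \<sigma> @ Suc n # drop g \<sigma>) \<longleftrightarrow> simsun \<sigma> \<and> \<not> hdd (take g \<sigma> @ Suc n # drop g \<sigma>)" if "g \<le> n" for g
      using simsun_ins[OF s that] .
    show "card {g. g \<le> n \<and> (simsun (take g \<sigma> @ Suc n # drop g \<sigma>) \<and> des (take g \<sigma> @ Suc n # drop g \<sigma>) = k)}
        = (if simsun \<sigma> then F (des \<sigma>) else 0)"
    proof (cases "simsun \<sigma>")
      case True
      have "{g. g \<le> n \<and> (simsun (take g \<sigma> @ Suc n # drop g \<sigma>) \<and> des (take g \<sigma> @ Suc n # drop g \<sigma>) = k)}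
          = {g. g \<le> n \<and> \<not> hdd (take g \<sigma> @ Suc n # drop g \<sigma>) \<and> des (take g \<sigma> @ Suc n # drop g \<sigma>) = k}"
        using sv True by blast
      also have "card \<dots> = F (des \<sigma>)" unfolding F_def
      proof (rule local_S)
        show "distinct \<sigma>" using s by (simp add: perms_def)
        show "\<forall>x\<in>set \<sigma>. x < Suc n" using s by (simp add: perms_def)
        show "\<not> hdd \<sigma>" using simsun_nodd[OF s True] .
        show "length \<sigma> = n" using s perms_length by blast
      qed
      finally show ?thesis using True by simp
    next
      case False
      have "{g. g \<le> n \<and> (simsun (take g \<sigma> @ Suc n # drop g \<sigma>) \<and> des (take g \<sigma> @ Suc n # drop g \<sigma>) = k)} = {}"
        using sv False by blast
      then show ?thesis using False by simp
    qed
  qed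
  also have "\<dots> = (\<Sum>\<sigma>\<in>RS n. F (des \<sigma>))"
    unfolding RS_def using finite_perms by (simp add: sum.inter_filter)
  also have "\<dots> = (\<Sum>\<sigma>\<in>RS n. (if des \<sigma> = k then k+1 else 0) + (if des \<sigma> + 1 = k then n - 2*(k-1) else 0))"
    by (rule sum.cong[OF refl]) (auto simp: F_def)
  also have "\<dots> = (\<Sum>\<sigma>\<in>RS n. if des \<sigma> = k then k+1 else 0) + (\<Sum>\<sigma>\<in>RS n. if des \<sigma> + 1 = k then n - 2*(k-1) else 0)"
    by (rule sum.distrib)
  also have "(\<Sum>\<sigma>\<in>RS n. if des \<sigma> = k then k+1 else 0) = (k+1) * S n k"
    unfolding S_def by (rule sum_if_const[OF finite_RS])
  also have "(\<Sum>\<sigma>\<in>RS n. if des \<sigma> + 1 = k then n - 2*(k-1) else 0) = (n - 2*(k-1)) * card {\<sigma>\<in>RS n. des \<sigma> + 1 = k}"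
    by (rule sum_if_const[OF finite_RS])
  also have "(n - 2*(k-1)) * card {\<sigma>\<in>RS n. des \<sigma> + 1 = k} = (if k = 0 then 0 else (n - 2*(k-1)) * S n (k-1))"
  proof (cases k)
    case 0 then show ?thesis by simp
  next
    case (Suc j) then show ?thesis unfolding S_def by simp
  qed
  finally show ?thesis .
qed


lemma local_W:
  assumes lt: "\<forall>x\<in>set \<sigma>. x < M" and l: "length \<sigma> = n" and n: "1 \<le> n"
  shows "card {g. g \<le> n \<and> ipk (take g \<sigma> @ M # drop g \<sigma>) = k}
     = (if k = ipk \<sigma> then 2 * ipk \<sigma> + 2 else if k = ipk \<sigma> + 1 then n - 1 - 2 * ipk \<sigma> else 0)"
proof -
  define v where "v g = take g \<sigma> @ M # drop g \<sigma>" for g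
  define Pk where "Pk = {j. 0 < j \<and> Suc j < n \<and> \<sigma> ! (j-1) < \<sigma> ! j \<and> \<sigma> ! j > \<sigma> ! Suc j}"
  have cP: "card Pk = ipk \<sigma>" unfolding Pk_def ipk_def l ..
  have finP: "finite Pk" unfolding Pk_def by (rule finite_subset[of _ "{..<n}"]) auto
  have ltt: "\<forall>x\<in>set (take g \<sigma>). x < M" "\<forall>x\<in>set (drop g \<sigma>). x < M" for g
    using lt by (meson in_set_takeD in_set_dropD)+
  have ipk_v: "ipk (v g) + (if g - 1 \<in> Pk then 1 else 0) + (if g \<in> Pk then 1 else 0)
      = ipk \<sigma> + (if 0 < g \<and> g < n then 1 else 0)" if g: "g \<le> n" for g
  proof -
    have tne: "take g \<sigma> \<noteq> [] \<longleftrightarrow> 0 < g" using l n g by (cases \<sigma>) auto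
    have dne: "drop g \<sigma> \<noteq> [] \<longleftrightarrow> g < n" using l by (simp add: not_le)
    have e1: "ipk (v g) = ipk (take g \<sigma>) + ipk (drop g \<sigma>) + (if 0 < g \<and> g < n then 1 else 0)"
      unfolding v_def ipk_ins[OF ltt(1) ltt(2)] tne dne ..
    have PL: "(length (take g \<sigma>) \<ge> 2 \<and> drop g \<sigma> \<noteq> [] \<and> take g \<sigma> ! (length (take g \<sigma>) - 2) < last (take g \<sigma>)
         \<and> last (take g \<sigma>) > hd (drop g \<sigma>)) \<longleftrightarrow> g - 1 \<in> Pk"
    proof (cases "2 \<le> g \<and> g < n")
      case True
      then have "length (take g \<sigma>) = g" "take g \<sigma> ! (g - 2) = \<sigma> ! (g - 2)" "last (take g \<sigma>) = \<sigma> ! (g - 1)"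
        "hd (drop g \<sigma>) = \<sigma> ! g" using l by (simp_all add: last_take hd_drop_conv_nth)
      moreover have "g - 1 - 1 = g - 2" "Suc (g - 1) = g" using True by simp_all
      ultimately show ?thesis using True l unfolding Pk_def by auto
    next
      case False
      have "g - 1 \<notin> Pk" using False g unfolding Pk_def by auto
      moreover have "length (take g \<sigma>) < 2 \<or> drop g \<sigma> = []" using False l g by auto
      ultimately show ?thesis by auto
    qed
    have PH: "(take g \<sigma> \<noteq> [] \<and> length (drop g \<sigma>) \<ge> 2 \<and> last (take g \<sigma>) < hd (drop g \<sigma>) \<and> hd (drop g \<sigma>) > drop g \<sigma> ! 1)
        \<longleftrightarrow> g \<in> Pk"
    proof (cases "0 < g \<and> Suc g < n")
      case True
      then have "last (take g \<sigma>) = \<sigma> ! (g - 1)" "hd (drop g \<sigma>) = \<sigma> ! g" "drop g \<sigma> ! 1 = \<sigma> ! Suc g"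
        using l by (simp_all add: last_take hd_drop_conv_nth)
      then show ?thesis using True l tne unfolding Pk_def by auto
    next
      case False
      have "g \<notin> Pk" using False unfolding Pk_def by auto
      moreover have "take g \<sigma> = [] \<or> length (drop g \<sigma>) < 2" using False l tne by auto
      ultimately show ?thesis by auto
    qed
    have e2: "ipk \<sigma> = ipk (take g \<sigma>) + ipk (drop g \<sigma>) + (if g - 1 \<in> Pk then 1 else 0) + (if g \<in> Pk then 1 else 0)"
    proof -
      have "ipk \<sigma> = ipk (take g \<sigma> @ drop g \<sigma>)" by simp
      also note ipk_append
      finally show ?thesis unfolding PL PH .
    qed
    show ?thesis using e1 e2 by linarith
  qed
  have disj: "Pk \<inter> Suc ` Pk = {}"
  proof (rule ccontr)
    assume "Pk \<inter> Suc ` Pk \<noteq> {}"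
    then obtain j where "j \<in> Pk" "Suc j \<in> Pk" by blast
    then show False unfolding Pk_def by auto
  qed
  have Psub: "Pk \<subseteq> {1..<n}" "Suc ` Pk \<subseteq> {1..<n}" unfolding Pk_def by auto
  have cU: "card (Pk \<union> Suc ` Pk) = 2 * ipk \<sigma>"
    using card_Un_disjoint[OF finP _ disj] finP cP by (simp add: card_image)
  have cU2: "2 * ipk \<sigma> \<le> n - 1"
  proof -
    have "card (Pk \<union> Suc ` Pk) \<le> card {1..<n}" using Psub by (intro card_mono) auto
    then show ?thesis using cU by simp
  qed
  have ipk_iff: "ipk (v g) = (if g \<in> {1..<n} - (Pk \<union> Suc ` Pk) then ipk \<sigma> + 1 else ipk \<sigma>)" if g: "g \<le> n" for g
  proof -
    have gm: "g - 1 \<in> Pk \<longleftrightarrow> g \<in> Suc ` Pk"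
    proof
      assume "g - 1 \<in> Pk"
      then have "0 < g - 1" unfolding Pk_def by simp
      then have "g = Suc (g - 1)" by simp
      then show "g \<in> Suc ` Pk" using \<open>g - 1 \<in> Pk\<close> by (metis image_eqI)
    next
      assume "g \<in> Suc ` Pk" then show "g - 1 \<in> Pk" by auto
    qed
    have nb: "\<not> (g - 1 \<in> Pk \<and> g \<in> Pk)" using gm disj by blast
    show ?thesis using ipk_v[OF g] gm nb Psub by (auto split: if_splits)
  qed
  let ?B = "{1..<n} - (Pk \<union> Suc ` Pk)"
  have cB: "card ?B = n - 1 - 2 * ipk \<sigma>"
    using Psub cU by (subst card_Diff_subset) (auto simp: finP)
  have Bsub: "?B \<subseteq> {..n}" by auto
  show ?thesis
  proof -
    let ?X = "{g. g \<le> n \<and> ipk (v g) = k}"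
    consider (a) "k = ipk \<sigma>" | (b) "k = ipk \<sigma> + 1" | (c) "k \<noteq> ipk \<sigma>" "k \<noteq> ipk \<sigma> + 1" by blast
    then show ?thesis
    proof cases
      case a
      have "?X = {..n} - ?B" using ipk_iff a by (auto split: if_splits)
      then have "card ?X = Suc n - (n - 1 - 2 * ipk \<sigma>)"
        using Bsub cB by (simp add: card_Diff_subset finite_subset[OF Bsub])
      also have "\<dots> = 2 * ipk \<sigma> + 2" using cU2 n by simp
      finally show ?thesis unfolding v_def using a by simp
    next
      case b
      have "?X = ?B" using ipk_iff b by (auto split: if_splits)
      then show ?thesis unfolding v_def using b cB by simp
    next
      case c
      have "?X = {}" using ipk_iff c by (auto split: if_splits)
      then show ?thesis unfolding v_def using c by simp
    qed
  qed
qed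



lemma W_rec: assumes n: "1 \<le> n"
  shows "W (Suc n) k = (2*k+2) * W n k + (if k = 0 then 0 else (n - 1 - 2*(k-1)) * W n (k-1))"
proof -
  define F where "F p = (if k = p then 2 * p + 2 else if k = p + 1 then n - 1 - 2 * p else 0)" for p
  have "W (Suc n) k = card {\<pi> \<in> perms (Suc n). ipk \<pi> = k}" unfolding W_def ..
  also have "\<dots> = (\<Sum>\<sigma>\<in>perms n. card {g. g \<le> n \<and> ipk (take g \<sigma> @ Suc n # drop g \<sigma>) = k})"
    by (rule card_perms_Suc)
  also have "\<dots> = (\<Sum>\<sigma>\<in>perms n. F (ipk \<sigma>))"
  proof (rule sum.cong[OF refl])
    fix \<sigma> assume s: "\<sigma> \<in> perms n"
    show "card {g. g \<le> n \<and> ipk (take g \<sigma> @ Suc n # drop g \<sigma>) = k} = F (ipk \<sigma>)" unfolding F_def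
    proof (rule local_W[OF _ _ n])
      show "\<forall>x\<in>set \<sigma>. x < Suc n" using s by (simp add: perms_def)
      show "length \<sigma> = n" using s perms_length by blast
    qed
  qed
  also have "\<dots> = (\<Sum>\<sigma>\<in>perms n. (if ipk \<sigma> = k then 2*k+2 else 0) + (if ipk \<sigma> + 1 = k then n - 1 - 2*(k-1) else 0))"
  proof (rule sum.cong[OF refl])
    fix \<sigma>
    show "F (ipk \<sigma>) = (if ipk \<sigma> = k then 2*k+2 else 0) + (if ipk \<sigma> + 1 = k then n - 1 - 2*(k-1) else 0)"
    proof (cases "ipk \<sigma> = k")
      case True then show ?thesis unfolding F_def by simp
    next
      case False
      show ?thesis
      proof (cases "ipk \<sigma> + 1 = k")
        case True
        then have kk: "k = Suc (ipk \<sigma>)" by simp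
        show ?thesis unfolding F_def kk by simp
      next
        case False2: False
        then show ?thesis unfolding F_def using False by simp
      qed
    qed
  qed
  also have "\<dots> = (\<Sum>\<sigma>\<in>perms n. if ipk \<sigma> = k then 2*k+2 else 0) + (\<Sum>\<sigma>\<in>perms n. if ipk \<sigma> + 1 = k then n - 1 - 2*(k-1) else 0)"
    by (rule sum.distrib)
  also have "(\<Sum>\<sigma>\<in>perms n. if ipk \<sigma> = k then 2*k+2 else 0) = (2*k+2) * W n k"
    unfolding W_def by (rule sum_if_const[OF finite_perms])
  also have "(\<Sum>\<sigma>\<in>perms n. if ipk \<sigma> + 1 = k then n - 1 - 2*(k-1) else 0) = (n - 1 - 2*(k-1)) * card {\<sigma>\<in>perms n. ipk \<sigma> + 1 = k}"
    by (rule sum_if_const[OF finite_perms])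
  also have "(n - 1 - 2*(k-1)) * card {\<sigma>\<in>perms n. ipk \<sigma> + 1 = k} = (if k = 0 then 0 else (n - 1 - 2*(k-1)) * W n (k-1))"
  proof (cases k)
    case 0 then show ?thesis by simp
  next
    case (Suc j) then show ?thesis unfolding W_def by simp
  qed
  finally show ?thesis .
qed


lemma filter_single: "{x \<in> {a}. P x} = (if P a then {a} else {})" by auto

lemma perms_0: "perms 0 = {[]}" unfolding perms_def by auto

lemma perms_1: "perms 1 = {[1]}"
proof (intro set_eqI iffI)
  fix xs assume "xs \<in> perms 1"
  then have l: "length xs = 1" by (rule perms_length)
  have st: "set xs = {1}" using \<open>xs \<in> perms 1\<close> by (simp add: perms_def)
  obtain a where "xs = [a]" using l by (cases xs) auto
  then show "xs \<in> {[1]}" using st by simp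
qed (simp add: perms_def)

lemma S_0: "S 0 k = (if k = 0 then 1 else 0)"
proof -
  have "simsun []" by (simp add: simsun_def)
  then have "RS 0 = {[]}" unfolding RS_def perms_0 by blast
  then show ?thesis unfolding S_def by (simp only: filter_single) simp
qed

lemma W_1: "W (Suc 0) k = (if k = 0 then 1 else 0)"
proof -
  have p: "perms (Suc 0) = {[1]}" using perms_1 by simp
  show ?thesis unfolding W_def p filter_single by simp
qed


lemma arith1: "(2::nat)^Suc j * ((2*Suc j+2)*a + c*b) = 2*(Suc j+1)*(2^Suc j*a) + 2*c*(2^j*b)"
  by (simp add: algebra_simps)

lemma arith2: "2*(k+1)*((2::nat)^n*x) + 2*c*(2^n*y) = 2^Suc n*((k+1)*x + c*y)"
  by (simp add: algebra_simps)

lemma part1_gen: "2^k * W (Suc n) k = 2^n * S n k"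
proof (induction n arbitrary: k)
  case 0 then show ?case by (simp add: W_1 S_0)
next
  case (Suc n)
  have w: "W (Suc (Suc n)) k = (2*k+2) * W (Suc n) k + (if k = 0 then 0 else (n - 2*(k-1)) * W (Suc n) (k-1))"
    using W_rec[of "Suc n" k] by simp
  have s: "S (Suc n) k = (k+1) * S n k + (if k = 0 then 0 else (n - 2*(k-1)) * S n (k-1))"
    by (rule S_rec)
  show ?case
  proof (cases k)
    case 0 then show ?thesis using w s Suc.IH[of 0] by simp
  next
    case (Suc j)
    define c where "c = n - 2*j"
    have w': "W (Suc (Suc n)) k = (2*k+2) * W (Suc n) k + c * W (Suc n) j" using w Suc c_def by simp
    have s': "S (Suc n) k = (k+1) * S n k + c * S n j" using s Suc c_def by simp
    have "2^k * W (Suc (Suc n)) k = 2^k * ((2*k+2) * W (Suc n) k + c * W (Suc n) j)" by (simp only: w')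
    also have "\<dots> = 2 * (k+1) * (2^k * W (Suc n) k) + 2 * c * (2^j * W (Suc n) j)"
      unfolding Suc by (rule arith1)
    also have "\<dots> = 2 * (k+1) * (2^n * S n k) + 2 * c * (2^n * S n j)"
      by (simp only: Suc.IH[of k] Suc.IH[of j])
    also have "\<dots> = 2^Suc n * S (Suc n) k" unfolding s' by (simp only: arith2)
    finally show ?thesis .
  qed
qed

lemma part1: "1 \<le> n \<Longrightarrow> k \<le> n div 2 \<Longrightarrow> W (n+1) k = 2 ^ (n - k) * S n k"
proof -
  assume "k \<le> n div 2"
  then have kn: "k \<le> n" by simp
  have p: "(2::nat)^n = 2^k * 2^(n-k)" using kn by (metis le_add_diff_inverse power_add)
  have "2^k * W (Suc n) k = 2^k * (2^(n-k) * S n k)"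
    using part1_gen[of k n] unfolding p by (simp only: mult.assoc)
  then have "W (Suc n) k = 2^(n-k) * S n k" by simp
  then show ?thesis by simp
qed


definition gc :: "nat \<Rightarrow> nat \<Rightarrow> real" where
  "gc m i = fact i * real (Stirling m i) * (-2) ^ (m - i)"

definition Gp :: "nat \<Rightarrow> real poly" where
  "Gp m = (\<Sum>i\<le>m. monom (gc m i) i)"

lemma gc_big: "m < i \<Longrightarrow> gc m i = 0" by (simp add: gc_def)

lemma coeff_Gp: "coeff (Gp m) j = gc m j"
proof -
  have "coeff (Gp m) j = (\<Sum>i\<le>m. if i = j then gc m i else 0)"
    unfolding Gp_def coeff_sum by (simp add: coeff_monom)
  also have "\<dots> = (if j \<le> m then gc m j else 0)" by (simp add: sum.delta)
  also have "\<dots> = gc m j" using gc_big[of m j] by auto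
  finally show ?thesis .
qed

lemma X_mult: "[:0,1:] * (p::real poly) = pCons 0 p" by (simp add: mult_pCons_left)
lemma X2_mult: "[:0,-2,1:] * (p::real poly) = pCons 0 (smult (-2) p + pCons 0 p)"
  by (simp add: mult_pCons_left)

lemma gc_Suc: "gc (Suc m) (Suc i) = real (Suc i) * gc m i - 2 * real (Suc i) * gc m (Suc i)"
proof (cases "i < m")
  case True
  have p: "(-2::real) ^ (m - i) = -2 * (-2) ^ (m - Suc i)" using True
    by (metis Suc_diff_Suc power_Suc)
  have "gc (Suc m) (Suc i) = fact (Suc i) * (real (Suc i) * real (Stirling m (Suc i)) + real (Stirling m i)) * (-2) ^ (m - i)"
    unfolding gc_def by (simp add: algebra_simps)
  also have "\<dots> = real (Suc i) * (fact i * real (Stirling m i) * (-2) ^ (m - i))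
      + real (Suc i) * (fact (Suc i) * real (Stirling m (Suc i)) * (-2) ^ (m - i))"
    by (simp only: fact_Suc of_nat_mult) (simp add: algebra_simps)
  also have "\<dots> = real (Suc i) * gc m i - 2 * real (Suc i) * gc m (Suc i)"
    unfolding gc_def p by (simp add: algebra_simps)
  finally show ?thesis .
next
  case False
  then have z: "Stirling m (Suc i) = 0" by simp
  have "gc (Suc m) (Suc i) = fact (Suc i) * real (Stirling m i) * (-2) ^ (m - i)"
    unfolding gc_def using z by simp
  also have "\<dots> = real (Suc i) * gc m i" unfolding gc_def by (simp add: algebra_simps)
  finally show ?thesis unfolding gc_def using z by simp
qed

lemma G_rec: "Gp (Suc m) = [:0,1:] * Gp m + [:0,-2,1:] * pderiv (Gp m)"
proof (rule poly_eqI)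
  fix j
  show "coeff (Gp (Suc m)) j = coeff ([:0,1:] * Gp m + [:0,-2,1:] * pderiv (Gp m)) j"
  proof (cases j)
    case 0 then show ?thesis unfolding X_mult X2_mult coeff_Gp by (simp add: gc_def)
  next
    case (Suc i)
    have "coeff ([:0,1:] * Gp m + [:0,-2,1:] * pderiv (Gp m)) j
        = gc m i - 2 * coeff (pderiv (Gp m)) i + (case i of 0 \<Rightarrow> 0 | Suc i' \<Rightarrow> coeff (pderiv (Gp m)) i')"
      unfolding X_mult X2_mult Suc by (cases i) (simp_all add: coeff_Gp)
    also have "\<dots> = real (Suc i) * gc m i - 2 * real (Suc i) * gc m (Suc i)"
      by (cases i) (simp_all add: coeff_pderiv coeff_Gp algebra_simps)
    also have "\<dots> = coeff (Gp (Suc m)) j" unfolding Suc coeff_Gp gc_Suc ..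
    finally show ?thesis by simp
  qed
qed


definition Fp :: "nat \<Rightarrow> real poly" where "Fp m = pcompose (Gp m) [:1,1:]"
definition Hp :: "nat \<Rightarrow> real poly" where "Hp m = [:-1,1:] * Fp m"

lemma pc1: "pcompose [:0,1:] [:1,1:] = ([:1,1:] :: real poly)" by (simp add: pcompose_pCons)
lemma pc2: "pcompose [:0,-2,1:] [:1,1:] = ([:-1,0,1:] :: real poly)" by (simp add: pcompose_pCons)
lemma pm1: "[:-1,1:] * [:1,1:] = ([:-1,0,1:] :: real poly)" by simp

lemma F_rec: "Fp (Suc m) = [:1,1:] * Fp m + [:-1,0,1:] * pderiv (Fp m)"
proof -
  have d: "pderiv (Fp m) = pcompose (pderiv (Gp m)) [:1,1:]"
    unfolding Fp_def pderiv_pcompose by (simp add: pderiv_pCons)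
  show ?thesis unfolding Fp_def G_rec pcompose_add pcompose_mult pc1 pc2 d[unfolded Fp_def] ..
qed

lemma ring_aux: "(a::'a::comm_ring_1) * b = c \<Longrightarrow> a * (b * F + c * F') = c * (a * F' + F)"
proof -
  assume e: "a * b = c"
  have "a * (b * F + c * F') = (a * b) * F + c * (a * F')" by (simp add: algebra_simps)
  also have "\<dots> = c * (a * F' + F)" unfolding e by (simp add: algebra_simps)
  finally show ?thesis .
qed

lemma H_rec: "Hp (Suc m) = [:-1,0,1:] * pderiv (Hp m)"
proof -
  have "pderiv (Hp m) = [:-1,1:] * pderiv (Fp m) + Fp m"
    unfolding Hp_def pderiv_mult by (simp add: pderiv_pCons)
  then show ?thesis unfolding Hp_def F_rec using ring_aux[OF pm1] by simp
qed

definition cF :: "nat \<Rightarrow> nat \<Rightarrow> real" where "cF m j = (\<Sum>i\<le>m. gc m i * real (i choose j))"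

lemma coeff_L1pow: "coeff ([:1,1:]^i) j = real (i choose j)"
proof (cases "j \<le> i")
  case True then show ?thesis using coeff_linear_poly_power[OF True, of 1 1] by simp
next
  case False
  have "degree ([:1,1::real:]^i) = i" by (simp add: degree_power_eq)
  then show ?thesis using False by (simp add: coeff_eq_0)
qed

lemma pcompose_power: "pcompose (p ^ i) q = (pcompose p q) ^ (i::nat)"
  by (induction i) (simp_all add: pcompose_mult pcompose_1)

lemma pcompose_monom_L1: "pcompose (monom c i) [:1,1:] = smult c ([:1,1::real:]^i)"
  unfolding monom_altdef pcompose_smult pcompose_power pc1 ..

lemma coeff_Fp: "coeff (Fp m) j = cF m j"
proof -
  have "Fp m = (\<Sum>i\<le>m. smult (gc m i) ([:1,1:]^i))"
    unfolding Fp_def Gp_def pcompose_sum pcompose_monom_L1 ..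
  then show ?thesis unfolding cF_def by (simp add: coeff_sum coeff_L1pow)
qed

definition h :: "nat \<Rightarrow> nat \<Rightarrow> real" where "h m j = coeff (Hp m) j"

lemma h_cF: "h m j = (if j = 0 then 0 else cF m (j - 1)) - cF m j"
proof -
  have "Hp m = smult (-1) (Fp m) + pCons 0 (Fp m)" unfolding Hp_def by (simp add: mult_pCons_left)
  then show ?thesis unfolding h_def by (cases j) (simp_all add: coeff_Fp)
qed

lemma cF_big: "m < j \<Longrightarrow> cF m j = 0"
  unfolding cF_def by (intro sum.neutral) simp

lemma h_big: "Suc m < j \<Longrightarrow> h m j = 0"
  by (simp add: h_cF cF_big)

lemma h_rec: "h (Suc m) t = (if 1 \<le> t then (real t - 1) * h m (t - 1) else 0) - (real t + 1) * h m (Suc t)"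
proof -
  have e: "[:-1,0,1:] * p = smult (-1) p + pCons 0 (pCons 0 (p::real poly))" for p
    by (simp add: mult_pCons_left)
  show ?thesis
  proof (cases t)
    case 0 then show ?thesis unfolding h_def H_rec e by (simp add: coeff_pderiv)
  next
    case (Suc t') note st = this
    show ?thesis
    proof (cases t')
      case 0 then show ?thesis unfolding h_def H_rec e st by (simp add: coeff_pderiv)
    next
      case (Suc t'') then show ?thesis unfolding h_def H_rec e st by (simp add: coeff_pderiv algebra_simps)
    qed
  qed
qed


definition q :: "nat \<Rightarrow> nat \<Rightarrow> real" where
  "q n k = (-1)^k * (if 2*k \<le> n+2 then h (Suc n) (n+2-2*k) else 0)"

lemma gc_0: "0 < m \<Longrightarrow> gc m 0 = 0"
  unfolding gc_def by (cases m) simp_all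

lemma p_coef_alt:
  assumes m: "0 < m"
  shows "real_of_int (p_coef m (int k)) = (-1)^k * (\<Sum>i\<le>m. gc m i *
      (real_of_int (ibinom i (int m - 2*int k)) - real_of_int (ibinom i (int m - 2*int k + 1))))"
proof -
  let ?f = "\<lambda>i. gc m i * (real_of_int (ibinom i (int m - 2*int k)) - real_of_int (ibinom i (int m - 2*int k + 1)))"
  have "real_of_int (p_coef m (int k)) = (-1)^k * (\<Sum>i=1..m. ?f i)"
    unfolding p_coef_def gc_def by (simp add: of_int_sum algebra_simps)
  also have "(\<Sum>i=1..m. ?f i) = (\<Sum>i\<le>m. ?f i)"
  proof -
    have e: "{..m} = insert 0 {1..m}" by auto
    show ?thesis unfolding e by (simp add: gc_0[OF m])
  qed
  finally show ?thesis .
qed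

lemma p_coef_q: "real_of_int (p_coef (Suc n) (int k)) = q n k"
proof -
  let ?m = "Suc n"
  have pa: "real_of_int (p_coef ?m (int k)) = (-1)^k * (\<Sum>i\<le>?m. gc ?m i *
      (real_of_int (ibinom i (int ?m - 2*int k)) - real_of_int (ibinom i (int ?m - 2*int k + 1))))"
    by (rule p_coef_alt) simp
  consider (a) "2*k \<le> n + 1" | (b) "2*k = n + 2" | (c) "2*k > n + 2" by linarith
  then show ?thesis
  proof cases
    case a
    define t where "t = n + 2 - 2*k"
    have t1: "1 \<le> t" using a by (simp add: t_def)
    have i1: "int ?m - 2*int k = int (t - 1)" using a by (simp add: t_def)
    have i2: "int (t - 1) + 1 = int t" using t1 by simp
    have "(\<Sum>i\<le>?m. gc ?m i * (real_of_int (ibinom i (int ?m - 2*int k)) - real_of_int (ibinom i (int ?m - 2*int k + 1))))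
        = (\<Sum>i\<le>?m. gc ?m i * real (i choose (t - 1)) - gc ?m i * real (i choose t))"
      unfolding i1 i2 ibinom_def by (simp add: algebra_simps)
    also have "\<dots> = cF ?m (t - 1) - cF ?m t" unfolding cF_def by (simp add: sum_subtractf)
    also have "\<dots> = h ?m t" using t1 by (simp add: h_cF)
    finally show ?thesis unfolding pa q_def using a by (simp add: t_def)
  next
    case b
    have i1: "int ?m - 2*int k = -1" using b by simp
    have i2: "int ?m - 2*int k + 1 = 0" using b by simp
    have "(\<Sum>i\<le>?m. gc ?m i * (real_of_int (ibinom i (int ?m - 2*int k)) - real_of_int (ibinom i (int ?m - 2*int k + 1))))
        = - cF ?m 0"
      unfolding i1 i2 ibinom_def cF_def by (simp add: sum_negf)
    also have "\<dots> = h ?m 0" by (simp add: h_cF)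
    finally show ?thesis unfolding pa q_def using b by simp
  next
    case c
    have i1: "int ?m - 2*int k < 0" "int ?m - 2*int k + 1 < 0" using c by simp_all
    then show ?thesis unfolding pa q_def ibinom_def using c by simp
  qed
qed

lemma q_rec: "q (Suc n) k = (real n + 2 - 2*real k) * q n k
     + (if k = 0 then 0 else (real n + 4 - 2*real k) * q n (k-1))"
proof (cases "2*k \<le> n + 3")
  case True
  define t where "t = n + 3 - 2*k"
  have hr: "h (Suc (Suc n)) t = (if 1 \<le> t then (real t - 1) * h (Suc n) (t - 1) else 0) - (real t + 1) * h (Suc n) (Suc t)"
    by (rule h_rec)
  have tt: "Suc n + 2 - 2*k = t" "2*k \<le> Suc n + 2" using True by (simp_all add: t_def)
  have lhs: "q (Suc n) k = (-1)^k * h (Suc (Suc n)) t" unfolding q_def tt(1) using tt(2) by simp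
  have A: "(real n + 2 - 2*real k) * q n k = (-1)^k * (if 1 \<le> t then (real t - 1) * h (Suc n) (t - 1) else 0)"
  proof (cases "1 \<le> t")
    case True2: True
    then have "2*k \<le> n+2" "t - 1 = n + 2 - 2*k" "real t - 1 = real n + 2 - 2*real k" using True by (simp_all add: t_def)
    then show ?thesis unfolding q_def using True2 by simp
  next
    case False
    then have "2*k = n+3" using True by (simp add: t_def)
    then show ?thesis unfolding q_def using False by simp
  qed
  have B: "(if k = 0 then 0 else (real n + 4 - 2*real k) * q n (k-1)) = - ((-1)^k * ((real t + 1) * h (Suc n) (Suc t)))"
  proof (cases k)
    case 0
    then have "h (Suc n) (Suc t) = 0" using h_big[of "Suc n" "Suc t"] by (simp add: t_def)
    then show ?thesis using 0 by simp
  next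
    case (Suc k')
    then have "2*k' \<le> n+2" "n + 2 - 2*k' = Suc t" "real n + 4 - 2*real k = real t + 1" using True by (simp_all add: t_def)
    then show ?thesis unfolding q_def using Suc by simp
  qed
  show ?thesis unfolding lhs hr A B by (simp add: algebra_simps)
next
  case False
  have "q (Suc n) k = 0" "q n k = 0" unfolding q_def using False by simp_all
  moreover have "(if k = 0 then 0 else (real n + 4 - 2*real k) * q n (k-1)) = 0"
  proof (cases "2*k = n+4")
    case True
    then have "real n + 4 - 2*real k = 0"
      by (metis add.commute diff_self of_nat_add of_nat_mult of_nat_numeral)
    then show ?thesis by simp
  next
    case False2: False
    then have "q n (k-1) = 0" unfolding q_def using False by simp
    then show ?thesis by simp
  qed
  ultimately show ?thesis by simp
qed


lemma S_zero: "n < 2*k \<Longrightarrow> S n k = 0"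
proof (induction n arbitrary: k)
  case 0 then show ?case by (simp add: S_0)
next
  case (Suc n)
  have a: "S n k = 0" using Suc.IH Suc.prems by simp
  have b: "(n - 2*(k-1)) * S n (k-1) = 0"
  proof (cases "n < 2*(k-1)")
    case True then show ?thesis using Suc.IH by simp
  next
    case False then have "n - 2*(k-1) = 0" using Suc.prems by simp
    then show ?thesis by simp
  qed
  show ?case unfolding S_rec using a b by simp
qed

definition Sp :: "nat \<Rightarrow> real poly" where "Sp n = (\<Sum>k\<le>n. monom (real (S n k)) k)"
definition Qp :: "nat \<Rightarrow> real poly" where "Qp n = (\<Sum>k\<le>n+2. monom (q n k) k)"

lemma coeff_Sp: "coeff (Sp n) j = real (S n j)"
proof -
  have "coeff (Sp n) j = (\<Sum>k\<le>n. if k = j then real (S n k) else 0)"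
    unfolding Sp_def coeff_sum by (simp add: coeff_monom)
  also have "\<dots> = (if j \<le> n then real (S n j) else 0)" by (simp add: sum.delta)
  also have "\<dots> = real (S n j)" using S_zero[of n j] by auto
  finally show ?thesis .
qed

lemma coeff_Qp: "coeff (Qp n) j = q n j"
proof -
  have "coeff (Qp n) j = (\<Sum>k\<le>n+2. if k = j then q n k else 0)"
    unfolding Qp_def coeff_sum by (simp add: coeff_monom)
  also have "\<dots> = (if j \<le> n+2 then q n j else 0)" by (simp add: sum.delta)
  also have "\<dots> = q n j" by (auto simp: q_def)
  finally show ?thesis .
qed

lemma S_rec_real: "real (S (Suc n) (Suc i)) = real (i+2) * real (S n (Suc i)) + (real n - 2 * real i) * real (S n i)"
proof -
  have e: "S (Suc n) (Suc i) = (i+2) * S n (Suc i) + (n - 2*i) * S n i" using S_rec[of n "Suc i"] by simp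
  show ?thesis
  proof (cases "n < 2*i")
    case True then show ?thesis unfolding e using S_zero[of n i] by (simp add: algebra_simps)
  next
    case False then have d: "real (n - 2*i) = real n - 2 * real i" by (simp add: of_nat_diff)
    have "real (S (Suc n) (Suc i)) = real (i+2) * real (S n (Suc i)) + real (n - 2*i) * real (S n i)"
      unfolding e by (simp only: of_nat_add of_nat_mult)
    then show ?thesis unfolding d .
  qed
qed

lemma Sp_rec: "Sp (Suc n) = [:1, real n:] * Sp n + [:0,1,-2:] * pderiv (Sp n)"
proof (rule poly_eqI)
  fix j
  have e1: "[:1, real n:] * p = p + pCons 0 (smult (real n) p)" for p by (simp add: mult_pCons_left)
  have e2: "[:0,1,-2:] * p = pCons 0 (p + pCons 0 (smult (-2) p))" for p :: "real poly" by (simp add: mult_pCons_left)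
  show "coeff (Sp (Suc n)) j = coeff ([:1, real n:] * Sp n + [:0,1,-2:] * pderiv (Sp n)) j"
  proof (cases j)
    case 0 then show ?thesis unfolding e1 e2 coeff_Sp using S_rec[of n 0] by (simp add: coeff_Sp)
  next
    case (Suc i)
    show ?thesis
    proof (cases i)
      case 0 then show ?thesis unfolding e1 e2 Suc coeff_Sp S_rec_real by (simp add: coeff_pderiv coeff_Sp algebra_simps)
    next
      case (Suc i') then show ?thesis unfolding e1 e2 \<open>j = Suc i\<close> coeff_Sp S_rec_real
        by (simp add: coeff_pderiv coeff_Sp algebra_simps)
    qed
  qed
qed

lemma Qp_rec: "Qp (Suc n) = [:1,1:] * (smult (real n + 2) (Qp n) - smult 2 (pCons 0 (pderiv (Qp n))))"
proof (rule poly_eqI)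
  fix j
  define T where "T = smult (real n + 2) (Qp n) - smult 2 (pCons 0 (pderiv (Qp n)))"
  have cT: "coeff T k = (real n + 2 - 2 * real k) * q n k" for k
    unfolding T_def by (cases k) (simp_all add: coeff_pderiv coeff_Qp algebra_simps)
  have e1: "[:1,1:] * p = p + pCons 0 p" for p :: "real poly" by (simp add: mult_pCons_left)
  show "coeff (Qp (Suc n)) j = coeff ([:1,1:] * (smult (real n + 2) (Qp n) - smult 2 (pCons 0 (pderiv (Qp n))))) j"
    unfolding T_def[symmetric] e1 coeff_Qp q_rec
    by (cases j) (simp_all add: cT algebra_simps)
qed


lemma ring_main1: fixes P1 P2 :: "real poly"
 shows "smult (2*c) (pCons 0 ([:1, real n:] * P1 + [:0,1,-2:] * P2)) = [:0,2:] * (smult (real n + 2) (smult c (pCons 0 P1)) - [:-1,2:] * smult c (P1 + pCons 0 P2))"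
proof (rule poly_eqI)
  fix j
  show "coeff (smult (2*c) (pCons 0 ([:1, real n:] * P1 + [:0,1,-2:] * P2))) j = coeff ([:0,2:] * (smult (real n + 2) (smult c (pCons 0 P1)) - [:-1,2:] * smult c (P1 + pCons 0 P2))) j"
    by (cases j; cases "j - 1"; simp add: mult_pCons_left coeff_pCons algebra_simps split: nat.splits)
qed

lemma q0: "q 0 0 = 1" "q 0 1 = 1" "q 0 2 = 0"
proof -
  have g: "gc (Suc 0) 0 = 0" "gc (Suc 0) (Suc 0) = 1" by (simp_all add: gc_def)
  have c: "cF (Suc 0) 0 = 1" "cF (Suc 0) (Suc 0) = 1" "cF (Suc 0) (Suc (Suc 0)) = 0" by (simp_all add: cF_def g)
  show "q 0 0 = 1" "q 0 1 = 1" "q 0 2 = 0" by (simp_all add: q_def h_cF c)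
qed

lemma Qp0: "Qp 0 = [:1,1:]"
proof -
  have "Qp 0 = monom (q 0 0) 0 + monom (q 0 1) 1 + monom (q 0 2) 2" unfolding Qp_def
    by (simp add: numeral_2_eq_2)
  also have "\<dots> = [:1,1:]" unfolding q0 by (simp add: monom_altdef)
  finally show ?thesis .
qed

lemma Sp0: "Sp 0 = [:1:]" unfolding Sp_def by (simp add: S_0)

lemma main: "smult (2^(n+1)) (pCons 0 (Sp n)) = pcompose (Qp n) [:-1,2:]"
proof (induction n)
  case 0 then show ?case unfolding Sp0 Qp0 by (simp add: pcompose_pCons)
next
  case (Suc n)
  let ?L = "[:-1,2::real:]"
  let ?c = "(2::real)^(n+1)"
  define R where "R = pcompose (Qp n) ?L"
  have IH: "R = smult ?c (pCons 0 (Sp n))" unfolding R_def using Suc.IH by simp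
  have dR: "pderiv R = smult 2 (pcompose (pderiv (Qp n)) ?L)"
    unfolding R_def pderiv_pcompose by (simp add: pderiv_pCons)
  have dR2: "pderiv (smult ?c (pCons 0 (Sp n))) = smult ?c (Sp n + pCons 0 (pderiv (Sp n)))"
    unfolding pderiv_smult pderiv_pCons ..
  have "pcompose (Qp (Suc n)) ?L = pcompose [:1,1:] ?L * (smult (real n + 2) R - smult 2 (pcompose (pCons 0 (pderiv (Qp n))) ?L))"
    unfolding Qp_rec pcompose_mult pcompose_diff pcompose_smult R_def ..
  also have "pcompose [:1,1:] ?L = [:0,2:]" by (simp add: pcompose_pCons)
  also have "smult 2 (pcompose (pCons 0 (pderiv (Qp n))) ?L) = ?L * pderiv R"
    unfolding dR by (simp add: pcompose_pCons mult_smult_right)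
  also have "[:0,2:] * (smult (real n + 2) R - ?L * pderiv R)
      = [:0,2:] * (smult (real n + 2) (smult ?c (pCons 0 (Sp n))) - ?L * smult ?c (Sp n + pCons 0 (pderiv (Sp n))))"
    unfolding IH dR2 ..
  also have "\<dots> = smult (2 * ?c) (pCons 0 ([:1, real n:] * Sp n + [:0,1,-2:] * pderiv (Sp n)))"
    by (rule ring_main1[symmetric])
  also have "\<dots> = smult (2^(Suc n + 1)) (pCons 0 (Sp (Suc n)))" unfolding Sp_rec by simp
  finally show ?case ..
qed

lemma part2: assumes "1 \<le> n" "(x::real) \<noteq> 0"
  shows "S_poly n x = 1 / (2 ^ (n+1) * x) *
           (\<Sum>k\<le>n div 2 + 1. real_of_int (p_coef (n+1) (int k)) * (2*x - 1) ^ k)"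
proof -
  have "poly (smult (2^(n+1)) (pCons 0 (Sp n))) x = poly (pcompose (Qp n) [:-1,2:]) x"
    by (simp only: main)
  then have e: "2^(n+1) * (x * S_poly n x) = (\<Sum>k\<le>n+2. q n k * (2*x - 1)^k)"
    unfolding S_poly_def Sp_def Qp_def by (simp add: poly_sum poly_monom poly_pcompose algebra_simps)
  have "(\<Sum>k\<le>n+2. q n k * (2*x - 1)^k) = (\<Sum>k\<le>n div 2 + 1. q n k * (2*x - 1)^k)"
  proof (rule sum.mono_neutral_right)
    show "finite {..n+2}" by simp
    show "{..n div 2 + 1} \<subseteq> {..n+2}" by auto
    show "\<forall>i\<in>{..n + 2} - {..n div 2 + 1}. q n i * (2 * x - 1) ^ i = 0"
    proof
      fix i assume "i \<in> {..n + 2} - {..n div 2 + 1}"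
      then have "n + 2 < 2 * i" by auto
      then show "q n i * (2 * x - 1) ^ i = 0" by (simp add: q_def)
    qed
  qed
  also have "\<dots> = (\<Sum>k\<le>n div 2 + 1. real_of_int (p_coef (n+1) (int k)) * (2*x - 1) ^ k)"
    using p_coef_q by simp
  finally have e2: "2^(n+1) * (x * S_poly n x) = (\<Sum>k\<le>n div 2 + 1. real_of_int (p_coef (n+1) (int k)) * (2*x - 1) ^ k)"
    using e by simp
  show ?thesis unfolding e2[symmetric] using assms(2) by simp
qed

theorem proposition1:
  shows "(\<forall>n k. 1 \<le> n \<and> k \<le> n div 2 \<longrightarrow> W (n+1) k = 2 ^ (n - k) * S n k)
    \<and> (\<forall>n (x::real). 1 \<le> n \<and> x \<noteq> 0 \<longrightarrow>
         S_poly n x = 1 / (2 ^ (n+1) * x) *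
           (\<Sum>k\<le>n div 2 + 1. real_of_int (p_coef (n+1) (int k)) * (2*x - 1) ^ k))"
  using part1 part2 by blast


end
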